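(* Let $(X,d)$ be a metric space and $x_0\in X$. Let $\ell:X\to[0,+\infty)$ be defined by $\ell(x_0)=0$ and $\ell(x)=1$ for all $x\neq x_0$. Then $X$ is complete if and only if the equation $(\mathcal{G}_0)$ with data $\ell$ has a unique solution, namely $u_0(x)=d(x,x_0)$.
   Context: Global slope: $G[u](x)=\sup_{y\neq x}\frac{(u(x)-u(y))_+}{d(x,y)}$ if $u(x)<+\infty$, $G[u](x)=+\infty$ otherwise ($\alpha_+=\max\{\alpha,0\}$). Equation $(\mathcal{G}_0)$ with data $\ell$: a solution is a lower semicontinuous $u:X\to\mathbb{R}\cup\{+\infty\}$ with $\inf_X u=0$ and $G[u](x)=\ell(x)$ for all $x\in X$. *)

theory Defs
  imports "HOL-Analysis.Analysis"
begin

text \<open>Functions with values in \<real> \<union> {+\<infinity>} are modelled as ereal-valued functions;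
  the normalisation inf u = 0 rules out the value -\<infinity>.\<close>

definition lsc :: "('a::metric_space \<Rightarrow> ereal) \<Rightarrow> bool" where
  "lsc u \<longleftrightarrow> (\<forall>x. \<forall>c. c < u x \<longrightarrow> (\<forall>\<^sub>F y in at x. c < u y))"

text \<open>The value 0 is included in the supremum (harmless since all terms are \<ge> 0), so that the
  supremum over an empty index set (one-point space) is 0.\<close>
definition global_slope :: "('a::metric_space \<Rightarrow> ereal) \<Rightarrow> 'a \<Rightarrow> ereal" where
  "global_slope u x =
     (if u x < \<infinity> then
        Sup (insert 0 {max (u x - u y) 0 / ereal (dist x y) | y. y \<noteq> x})
      else \<infinity>)"

definition is_solution_G0 :: "('a::metric_space \<Rightarrow> real) \<Rightarrow> ('a \<Rightarrow> ereal) \<Rightarrow> bool" where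
  "is_solution_G0 l u \<longleftrightarrow>
     lsc u \<and> (INF x. u x) = 0 \<and> (\<forall>x. global_slope u x = ereal (l x))"

end

theory Submission
  imports Defs
begin


lemma gs_real:
  fixes g :: "'a::metric_space \<Rightarrow> real"
  shows "global_slope (\<lambda>x. ereal (g x)) x =
    Sup (insert 0 ((\<lambda>y. ereal (max (g x - g y) 0 / dist x y)) ` {y. y \<noteq> x}))"
proof -
  have "{max (ereal (g x) - ereal (g y)) 0 / ereal (dist x y) | y. y \<noteq> x}
      = (\<lambda>y. ereal (max (g x - g y) 0 / dist x y)) ` {y. y \<noteq> x}"
  proof -
    have "max (ereal (g x) - ereal (g y)) 0 / ereal (dist x y) = ereal (max (g x - g y) 0 / dist x y)"
      if "y \<noteq> x" for y
      using that by (simp add: max_def)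
    then show ?thesis unfolding setcompr_eq_image by (intro image_cong) auto
  qed
  then show ?thesis unfolding global_slope_def by simp
qed

lemma slope_le1:
  fixes g :: "'a::metric_space \<Rightarrow> real"
  assumes "\<And>y. g x - g y \<le> dist x y"
  shows "global_slope (\<lambda>x. ereal (g x)) x \<le> 1"
  unfolding gs_real
proof (rule Sup_least)
  fix z assume "z \<in> insert 0 ((\<lambda>y. ereal (max (g x - g y) 0 / dist x y)) ` {y. y \<noteq> x})"
  then consider "z = 0" | y where "y \<noteq> x" "z = ereal (max (g x - g y) 0 / dist x y)" by auto
  then show "z \<le> 1"
  proof cases
    case 2
    have "max (g x - g y) 0 \<le> dist x y" using assms[of y] by simp
    then have "max (g x - g y) 0 / dist x y \<le> 1" using 2 by (simp add: divide_le_eq_1)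
    then show ?thesis using 2 by simp
  qed simp
qed

lemma slope_le1_rev:
  fixes g :: "'a::metric_space \<Rightarrow> real"
  assumes "global_slope (\<lambda>x. ereal (g x)) x \<le> 1"
  shows "g x - g y \<le> dist x y"
proof (cases "y = x")
  case False
  have "ereal (max (g x - g y) 0 / dist x y) \<le> 1"
    using assms unfolding gs_real using False
    by (meson Sup_le_iff insertCI mem_Collect_eq rev_image_eqI)
  then have "max (g x - g y) 0 / dist x y \<le> 1" by simp
  then show ?thesis using False by (simp add: divide_le_eq_1)
qed simp

lemma slope_ge1:
  fixes g :: "'a::metric_space \<Rightarrow> real"
  assumes "\<And>lam. 0 < lam \<Longrightarrow> lam < 1 \<Longrightarrow> \<exists>y. y \<noteq> x \<and> lam * dist x y < g x - g y"
  shows "1 \<le> global_slope (\<lambda>x. ereal (g x)) x"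
  unfolding gs_real
proof (rule dense_le)
  let ?S = "insert 0 ((\<lambda>y. ereal (max (g x - g y) 0 / dist x y)) ` {y. y \<noteq> x})"
  fix z :: ereal assume z: "z < 1"
  have S0: "0 \<le> Sup ?S" by (simp add: Sup_upper)
  show "z \<le> Sup ?S"
  proof (cases z)
    case (real r)
    show ?thesis
    proof (cases "r \<le> 0")
      case True then have "z \<le> 0" using real by (simp add: zero_ereal_def)
      then show ?thesis using S0 by (rule order_trans)
    next
      case False
      with z real have "0 < r" "r < 1" by auto
      from assms[OF this] obtain y where y: "y \<noteq> x" "r * dist x y < g x - g y" by auto
      then have "r \<le> max (g x - g y) 0 / dist x y"
        by (simp add: le_divide_eq)
      then have "z \<le> ereal (max (g x - g y) 0 / dist x y)" using real by simp
      also have "\<dots> \<le> Sup ?S" using y by (intro Sup_upper) auto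
      finally show ?thesis .
    qed
  qed (use z in auto)
qed

lemma slope_ge1_rev:
  fixes g :: "'a::metric_space \<Rightarrow> real"
  assumes "1 \<le> global_slope (\<lambda>x. ereal (g x)) x" "0 < lam" "lam < 1"
  shows "\<exists>y. y \<noteq> x \<and> lam * dist x y < g x - g y"
proof -
  have "ereal lam < Sup (insert 0 ((\<lambda>y. ereal (max (g x - g y) 0 / dist x y)) ` {y. y \<noteq> x}))"
    using assms unfolding gs_real by (meson ereal_less(3) ereal_less_le less_le_trans one_ereal_def)
  then obtain z where "z \<in> insert 0 ((\<lambda>y. ereal (max (g x - g y) 0 / dist x y)) ` {y. y \<noteq> x})" "ereal lam < z"
    using less_Sup_iff by blast
  then obtain y where y: "y \<noteq> x" "lam < max (g x - g y) 0 / dist x y"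
    using assms(2) by auto
  then have "lam * dist x y < max (g x - g y) 0" by (simp add: less_divide_eq)
  moreover have "0 < lam * dist x y" using y assms by simp
  ultimately show ?thesis using y by (auto simp: max_def split: if_splits)
qed

lemma slope_0:
  fixes g :: "'a::metric_space \<Rightarrow> real"
  assumes "\<And>y. g x \<le> g y"
  shows "global_slope (\<lambda>x. ereal (g x)) x = 0"
  unfolding gs_real
proof (rule antisym)
  show "Sup (insert 0 ((\<lambda>y. ereal (max (g x - g y) 0 / dist x y)) ` {y. y \<noteq> x})) \<le> 0"
  proof (rule Sup_least)
    fix z assume "z \<in> insert 0 ((\<lambda>y. ereal (max (g x - g y) 0 / dist x y)) ` {y. y \<noteq> x})"
    then show "z \<le> 0" using assms by (auto simp: max_def)
  qed
qed (rule Sup_upper, simp)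

lemma slope_0_rev:
  fixes g :: "'a::metric_space \<Rightarrow> real"
  assumes "global_slope (\<lambda>x. ereal (g x)) x = 0"
  shows "g x \<le> g y"
proof (cases "y = x")
  case False
  have "ereal (max (g x - g y) 0 / dist x y) \<le> 0"
    using assms unfolding gs_real using False
    by (metis (mono_tags, lifting) Sup_upper image_eqI insertCI mem_Collect_eq)
  then have "max (g x - g y) 0 / dist x y \<le> 0" by simp
  then show ?thesis using False by (simp add: divide_le_0_iff max_def split: if_splits)
qed simp



lemma half_pow_small: "0 < (e::real) \<Longrightarrow> \<exists>N. (1/2::real)^N < e"
  using real_arch_pow_inv[of e "1/2"] by auto

lemma lip_cont:
  fixes f :: "'a::metric_space \<Rightarrow> real"
  assumes lip: "\<And>x y. f x - f y \<le> dist x y"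
  shows "continuous_on UNIV f"
proof (rule lipschitz_on_continuous_on)
  show "1-lipschitz_on UNIV f"
  proof (rule lipschitz_onI)
    fix x y :: 'a
    show "dist (f x) (f y) \<le> 1 * dist x y"
      using lip[of x y] lip[of y x] by (simp add: dist_real_def dist_commute abs_le_iff)
  qed simp
qed

lemma ekeland_step:
  fixes f :: "'a::metric_space \<Rightarrow> real"
  assumes complete: "complete (UNIV::'a set)"
    and f0: "\<And>x. 0 \<le> f x" and lip: "\<And>x y. f x - f y \<le> dist x y"
    and slope: "\<And>z lam. z \<noteq> x0 \<Longrightarrow> 0 < lam \<Longrightarrow> lam < 1 \<Longrightarrow> \<exists>w. w \<noteq> z \<and> lam * dist z w < f z - f w"
    and lam: "0 < lam" "lam < 1"
  shows "f x0 + lam * dist x x0 \<le> f x"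
proof -
  define S where "S z = {w. f w + lam * dist z w \<le> f z}" for z
  have Sself: "z \<in> S z" for z by (simp add: S_def)
  have Strans: "S w \<subseteq> S z" if "w \<in> S z" for w z
  proof
    fix v assume "v \<in> S w"
    then have "f v + lam * dist w v \<le> f w" by (simp add: S_def)
    moreover have "f w + lam * dist z w \<le> f z" using that by (simp add: S_def)
    moreover have "lam * dist z v \<le> lam * dist z w + lam * dist w v"
      using dist_triangle[of z v w] lam by (simp add: distrib_left[symmetric])
    ultimately show "v \<in> S z" by (simp add: S_def)
  qed
  have contf: "continuous_on UNIV f" using lip_cont[OF lip] .
  have Sclosed: "closed (S z)" for z
  proof -
    have "closed {w. f w + lam * dist z w \<le> f z}"
      by (intro closed_Collect_le continuous_intros contf) 
    then show ?thesis by (simp add: S_def)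
  qed
  have bdd: "bdd_below (f ` S z)" for z using f0 by (intro bdd_belowI[of _ 0]) auto
  have ex: "\<exists>w. w \<in> S z \<and> f w < Inf (f ` S z) + (1/2)^n" for z n
  proof -
    have "f ` S z \<noteq> {}" using Sself by blast
    moreover have "Inf (f ` S z) < Inf (f ` S z) + (1/2)^n" by simp
    ultimately obtain a where a: "a \<in> f ` S z" "a < Inf (f ` S z) + (1/2)^n"
      by (meson cInf_lessD)
    from a(1) obtain w where "w \<in> S z" "a = f w" by (rule imageE)
    then show ?thesis using a(2) by auto
  qed
  define nxt where "nxt z n = (SOME w. w \<in> S z \<and> f w < Inf (f ` S z) + (1/2)^n)" for z n
  have nxt: "nxt z n \<in> S z \<and> f (nxt z n) < Inf (f ` S z) + (1/2)^n" for z n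
    unfolding nxt_def by (rule someI_ex) (rule ex)
  define zs where "zs = rec_nat x (\<lambda>n z. nxt z n)"
  have zs0: "zs 0 = x" and zsS: "zs (Suc n) = nxt (zs n) n" for n by (simp_all add: zs_def)
  have diam: "lam * dist (zs (Suc n)) w \<le> (1/2)^n" if "w \<in> S (zs (Suc n))" for n w
  proof -
    have w1: "w \<in> S (zs n)" using Strans[of "zs (Suc n)" "zs n"] nxt[of "zs n" n] that zsS by auto
    have "Inf (f ` S (zs n)) \<le> f w" using w1 bdd by (intro cInf_lower) auto
    moreover have "f w + lam * dist (zs (Suc n)) w \<le> f (zs (Suc n))" using that by (simp add: S_def)
    moreover have "f (zs (Suc n)) < Inf (f ` S (zs n)) + (1/2)^n" using nxt zsS by simp
    ultimately show ?thesis by linarith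
  qed
  have chain: "zs m \<in> S (zs n)" if "n \<le> m" for n m
    using that
  proof (induction m rule: dec_induct)
    case base then show ?case by (rule Sself)
  next
    case (step m)
    have "zs (Suc m) \<in> S (zs m)" using nxt zsS by simp
    then show ?case using Strans step.IH by blast
  qed
  have close: "dist a b \<le> 2 * (1/2)^n / lam" if "a \<in> S (zs (Suc n))" "b \<in> S (zs (Suc n))" for a b n
  proof -
    have "dist a b \<le> dist (zs (Suc n)) a + dist (zs (Suc n)) b"
      using dist_triangle[of a b "zs (Suc n)"] by (simp add: dist_commute)
    moreover have "dist (zs (Suc n)) a \<le> (1/2)^n / lam" using diam[OF that(1)] lam
      by (simp add: le_divide_eq mult.commute)
    moreover have "dist (zs (Suc n)) b \<le> (1/2)^n / lam" using diam[OF that(2)] lam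
      by (simp add: le_divide_eq mult.commute)
    ultimately show ?thesis by simp
  qed
  have small: "\<exists>N. 2 * (1/2)^N / lam < e" if "0 < e" for e
  proof -
    obtain N where "(1/2::real)^N < e * lam / 2" using half_pow_small[of "e * lam / 2"] \<open>0 < e\<close> lam by auto
    then show ?thesis using lam by (auto simp: divide_less_eq mult.commute)
  qed
  have "Cauchy zs"
    unfolding Cauchy_def
  proof (intro allI impI)
    fix e :: real assume "0 < e"
    then obtain N where N: "2 * (1/2)^N / lam < e" using small by blast
    have "dist (zs m) (zs n) < e" if "m \<ge> Suc N" "n \<ge> Suc N" for m n
      using close[OF chain[OF that(1)] chain[OF that(2)]] N by linarith
    then show "\<exists>M. \<forall>m\<ge>M. \<forall>n\<ge>M. dist (zs m) (zs n) < e" by blast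
  qed
  then obtain zstar where lim: "zs \<longlonglongrightarrow> zstar"
    using complete unfolding complete_def by blast
  have zstarS: "zstar \<in> S (zs n)" for n
  proof (rule Lim_in_closed_set[OF Sclosed _ _ lim])
    show "\<forall>\<^sub>F m in sequentially. zs m \<in> S (zs n)"
      by (rule eventually_sequentiallyI[of n]) (rule chain)
  qed simp
  have "zstar = x0"
  proof (rule ccontr)
    assume "zstar \<noteq> x0"
    from slope[OF this lam] obtain w where w: "w \<noteq> zstar" "lam * dist zstar w < f zstar - f w" by blast
    then have "w \<in> S zstar" by (simp add: S_def)
    then have wS: "w \<in> S (zs (Suc n))" for n using Strans[OF zstarS] by blast
    have "0 < dist zstar w" using w by simp
    then obtain N where N: "2 * (1/2)^N / lam < dist zstar w" using small by blast
    show False using close[OF zstarS wS, of N] N by linarith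
  qed
  then have "x0 \<in> S x" using zstarS[of 0] zs0 by simp
  then show ?thesis by (simp add: S_def dist_commute)
qed

lemma core:
  fixes f :: "'a::metric_space \<Rightarrow> real"
  assumes complete: "complete (UNIV::'a set)"
    and f0: "\<And>x. 0 \<le> f x" and lip: "\<And>x y. f x - f y \<le> dist x y"
    and slope: "\<And>z lam. z \<noteq> x0 \<Longrightarrow> 0 < lam \<Longrightarrow> lam < 1 \<Longrightarrow> \<exists>w. w \<noteq> z \<and> lam * dist z w < f z - f w"
    and fx0: "f x0 = 0"
  shows "dist x x0 \<le> f x"
proof (rule ccontr)
  assume "\<not> dist x x0 \<le> f x"
  then have lt: "f x < dist x x0" by simp
  moreover have "0 \<le> f x" by (rule f0)
  ultimately have d: "0 < dist x x0" by linarith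
  define lam where "lam = (f x / dist x x0 + 1) / 2"
  have "f x / dist x x0 < 1" using lt d by (simp add: divide_less_eq)
  moreover have "0 \<le> f x / dist x x0" using f0[of x] d by simp
  ultimately have l1: "0 < lam" and l2: "lam < 1" by (auto simp: lam_def)
  have "f x0 + lam * dist x x0 \<le> f x"
    by (rule ekeland_step[OF complete f0 lip _ l1 l2]) (rule slope)
  then have "lam * dist x x0 \<le> f x" using fx0 by simp
  moreover have "lam * dist x x0 = (f x + dist x x0) / 2" using d by (simp add: lam_def field_simps)
  ultimately have "(f x + dist x x0) / 2 \<le> f x" by simp
  then show False using lt by simp
qed



lemma lsc_lip:
  fixes g :: "'a::metric_space \<Rightarrow> real"
  assumes lip: "\<And>x y. g x - g y \<le> dist x y"
  shows "lsc (\<lambda>x. ereal (g x))"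
  unfolding lsc_def
proof (intro allI impI)
  fix x c assume c: "c < ereal (g x)"
  have "isCont g x" using lip_cont[OF lip] by (simp add: continuous_on_eq_continuous_at)
  then have "(g \<longlongrightarrow> g x) (at x)" by (simp add: isCont_def)
  then have "((\<lambda>y. ereal (g y)) \<longlongrightarrow> ereal (g x)) (at x)" by (rule tendsto_ereal)
  from order_tendstoD(1)[OF this c] show "\<forall>\<^sub>F y in at x. c < ereal (g y)" .
qed

lemma inf_zero:
  fixes g :: "'a::metric_space \<Rightarrow> real"
  assumes "\<And>x. 0 \<le> g x" "g x0 = 0"
  shows "(INF x. ereal (g x)) = 0"
proof (rule antisym)
  show "(INF x. ereal (g x)) \<le> 0" using assms(2) by (metis INF_lower UNIV_I zero_ereal_def)
  show "0 \<le> (INF x. ereal (g x))" using assms(1) by (intro INF_greatest) simp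
qed

lemma sol_of_real:
  fixes g :: "'a::metric_space \<Rightarrow> real" and l :: "'a \<Rightarrow> real"
  assumes l0: "l x0 = 0" and l1: "\<And>x. x \<noteq> x0 \<Longrightarrow> l x = 1"
    and g0: "\<And>x. 0 \<le> g x" and gx0: "g x0 = 0" and lip: "\<And>x y. g x - g y \<le> dist x y"
    and slope: "\<And>z lam. z \<noteq> x0 \<Longrightarrow> 0 < lam \<Longrightarrow> lam < 1 \<Longrightarrow> \<exists>w. w \<noteq> z \<and> lam * dist z w < g z - g w"
  shows "is_solution_G0 l (\<lambda>x. ereal (g x))"
  unfolding is_solution_G0_def
proof (intro conjI allI)
  show "lsc (\<lambda>x. ereal (g x))" by (rule lsc_lip[OF lip])
  show "(INF x. ereal (g x)) = 0" by (rule inf_zero[where g=g, OF g0 gx0])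
  fix x
  show "global_slope (\<lambda>x. ereal (g x)) x = ereal (l x)"
  proof (cases "x = x0")
    case True
    then have "global_slope (\<lambda>x. ereal (g x)) x = 0" using g0 gx0 by (intro slope_0) simp
    then show ?thesis using True l0 by simp
  next
    case False
    have "global_slope (\<lambda>x. ereal (g x)) x = 1"
      by (rule antisym, rule slope_le1, rule lip, rule slope_ge1, rule slope[OF False])
    then show ?thesis using l1[OF False] by simp
  qed
qed

lemma real_of_sol:
  fixes l :: "'a::metric_space \<Rightarrow> real"
  assumes "is_solution_G0 l u"
  shows "u = (\<lambda>x. ereal (real_of_ereal (u x))) \<and> (\<forall>x. 0 \<le> real_of_ereal (u x))"
proof -
  have fin: "u x < \<infinity>" for x
  proof (rule ccontr)
    assume "\<not> u x < \<infinity>"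
    then have "global_slope u x = \<infinity>" by (simp add: global_slope_def)
    then show False using assms by (simp add: is_solution_G0_def)
  qed
  have pos: "0 \<le> u x" for x
  proof -
    have "(INF x. u x) \<le> u x" by (rule INF_lower) simp
    then show ?thesis using assms by (simp add: is_solution_G0_def)
  qed
  have "ereal (real_of_ereal (u x)) = u x" for x using fin[of x] pos[of x]
    by (cases "u x") auto
  moreover have "0 \<le> real_of_ereal (u x)" for x using pos[of x] by (simp add: real_of_ereal_pos)
  ultimately show ?thesis by auto
qed



lemma noncomplete_sol:
  fixes s :: "nat \<Rightarrow> 'a::metric_space" and x0 :: 'a
  assumes cs: "Cauchy s" and nc: "\<not> (\<exists>l. s \<longlonglongrightarrow> l)"
  shows "\<exists>g. (\<forall>x. 0 \<le> g x) \<and> g x0 = 0 \<and> (\<forall>x y. g x - g y \<le> dist x y) \<and>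
     (\<forall>z lam. z \<noteq> x0 \<longrightarrow> 0 < lam \<longrightarrow> lam < 1 \<longrightarrow> (\<exists>w. w \<noteq> z \<and> lam * dist z w < g z - g w)) \<and>
     (\<exists>x. g x \<noteq> dist x x0)"
proof -
  define h where "h x = lim (\<lambda>n. dist x (s n))" for x
  have conv: "(\<lambda>n. dist x (s n)) \<longlonglongrightarrow> h x" for x
  proof -
    have "Cauchy (\<lambda>n. dist x (s n))"
      unfolding Cauchy_def
    proof (intro allI impI)
      fix e :: real assume "0 < e"
      then obtain M where M: "\<forall>m\<ge>M. \<forall>n\<ge>M. dist (s m) (s n) < e" using cs unfolding Cauchy_def by blast
      have "dist (dist x (s m)) (dist x (s n)) < e" if "m \<ge> M" "n \<ge> M" for m n
      proof -
        have "dist (s m) (s n) < e" using M that by blast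
        moreover have "dist x (s m) \<le> dist x (s n) + dist (s n) (s m)" by (rule dist_triangle)
        moreover have "dist x (s n) \<le> dist x (s m) + dist (s m) (s n)" by (rule dist_triangle)
        ultimately show ?thesis by (simp add: dist_real_def dist_commute abs_less_iff)
      qed
      then show "\<exists>M. \<forall>m\<ge>M. \<forall>n\<ge>M. dist (dist x (s m)) (dist x (s n)) < e" by blast
    qed
    then have "convergent (\<lambda>n. dist x (s n))" by (simp add: Cauchy_convergent_iff)
    then show ?thesis unfolding h_def by (simp add: convergent_LIMSEQ_iff)
  qed
  have h0: "0 \<le> h x" for x by (rule LIMSEQ_le_const[OF conv]) simp
  have hlip: "h x - h y \<le> dist x y" for x y
  proof (rule LIMSEQ_le_const2[OF tendsto_diff[OF conv conv]])
    have "dist x (s n) - dist y (s n) \<le> dist x y" for n using dist_triangle[of x "s n" y] by simp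
    then show "\<exists>N. \<forall>n\<ge>N. dist x (s n) - dist y (s n) \<le> dist x y" by blast
  qed
  have hpos: "0 < h x" for x
  proof (rule ccontr)
    assume "\<not> 0 < h x"
    then have "h x = 0" using h0[of x] by simp
    then have "(\<lambda>n. dist (s n) x) \<longlonglongrightarrow> 0" using conv[of x] by (simp add: dist_commute)
    then have "s \<longlonglongrightarrow> x" by (rule tendsto_dist_iff[THEN iffD2])
    then show False using nc by blast
  qed
  have hs: "(\<lambda>n. h (s n)) \<longlonglongrightarrow> 0"
  proof (rule LIMSEQ_I)
    fix r :: real assume "0 < r"
    then have "0 < r / 2" by simp
    then obtain M where M: "\<forall>m\<ge>M. \<forall>n\<ge>M. dist (s m) (s n) < r / 2" using cs unfolding Cauchy_def
      by blast
    have "norm (h (s n) - 0) < r" if "n \<ge> M" for n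
    proof -
      have "h (s n) \<le> r / 2"
      proof (rule LIMSEQ_le_const2[OF conv])
        have "dist (s n) (s m) \<le> r / 2" if "m \<ge> M" for m using M \<open>n \<ge> M\<close> that by (simp add: less_imp_le)
        then show "\<exists>N. \<forall>m\<ge>N. dist (s n) (s m) \<le> r / 2" by blast
      qed
      then show ?thesis using h0[of "s n"] \<open>0 < r\<close> by simp
    qed
    then show "\<exists>no. \<forall>n\<ge>no. norm (h (s n) - 0) < r" by blast
  qed
  define g where "g x = min (dist x x0) (h x)" for x
  have g0: "0 \<le> g x" for x using h0[of x] by (simp add: g_def)
  have gx0: "g x0 = 0" using h0[of x0] by (simp add: g_def)
  have glip: "g x - g y \<le> dist x y" for x y
  proof -
    have "dist x x0 - dist y x0 \<le> dist x y" using dist_triangle[of x x0 y] by simp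
    then show ?thesis using hlip[of x y] by (auto simp: g_def min_def)
  qed
  have gslope: "\<exists>w. w \<noteq> z \<and> lam * dist z w < g z - g w" if z: "z \<noteq> x0" and lam: "0 < lam" "lam < 1" for z lam
  proof (cases "dist z x0 \<le> h z")
    case True
    then have "g z = dist z x0" by (simp add: g_def)
    moreover have "lam * dist z x0 < dist z x0" using z lam by simp
    ultimately show ?thesis using z gx0 by (intro exI[of _ x0]) auto
  next
    case False
    then have gz: "g z = h z" by (simp add: g_def)
    have "(\<lambda>n. h z - h (s n) - lam * dist z (s n)) \<longlonglongrightarrow> h z - 0 - lam * h z"
      by (intro tendsto_intros hs conv)
    moreover have "0 < h z - 0 - lam * h z" using hpos[of z] lam by (simp add: algebra_simps)
    ultimately have "\<forall>\<^sub>F n in sequentially. 0 < h z - h (s n) - lam * dist z (s n)"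
      by (rule order_tendstoD(1))
    then obtain n where n: "0 < h z - h (s n) - lam * dist z (s n)"
      by (auto simp: eventually_sequentially)
    have "g (s n) \<le> h (s n)" by (simp add: g_def)
    then have "lam * dist z (s n) < g z - g (s n)" using n gz by linarith
    moreover have "s n \<noteq> z" using n by auto
    ultimately show ?thesis by blast
  qed
  have gne: "\<exists>x. g x \<noteq> dist x x0"
  proof -
    have "\<forall>\<^sub>F n in sequentially. h x0 / 2 < dist x0 (s n)"
      using order_tendstoD(1)[OF conv[of x0], of "h x0 / 2"] hpos[of x0] by simp
    moreover have "\<forall>\<^sub>F n in sequentially. h (s n) < h x0 / 2"
      using order_tendstoD(2)[OF hs, of "h x0 / 2"] hpos[of x0] by simp
    ultimately have "\<forall>\<^sub>F n in sequentially. h (s n) < h x0 / 2 \<and> h x0 / 2 < dist x0 (s n)"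
      by (rule eventually_conj[rotated])
    then obtain n where n: "h (s n) < h x0 / 2" "h x0 / 2 < dist x0 (s n)"
      by (auto simp: eventually_sequentially)
    have "g (s n) < dist (s n) x0" using n by (simp add: g_def dist_commute)
    then show ?thesis by (intro exI[of _ "s n"]) simp
  qed
  show ?thesis using g0 gx0 glip gslope gne by blast
qed

theorem corollary3p12:
  fixes x0 :: "'a::metric_space" and l :: "'a \<Rightarrow> real"
  assumes "l x0 = 0"
    and "\<And>x. x \<noteq> x0 \<Longrightarrow> l x = 1"
  shows "complete (UNIV :: 'a set) \<longleftrightarrow>
           (\<forall>u. is_solution_G0 l u \<longleftrightarrow> u = (\<lambda>x. ereal (dist x x0)))"
proof
  assume comp: "complete (UNIV :: 'a set)"
  show "\<forall>u. is_solution_G0 l u \<longleftrightarrow> u = (\<lambda>x. ereal (dist x x0))"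
  proof (intro allI iffI)
    fix u assume sol: "is_solution_G0 l u"
    define g where "g x = real_of_ereal (u x)" for x
    have ug: "u = (\<lambda>x. ereal (g x))" and g0: "\<And>x. 0 \<le> g x"
      using real_of_sol[OF sol] by (auto simp: g_def)
    have sl: "global_slope (\<lambda>x. ereal (g x)) x = ereal (l x)" for x
      using sol ug by (simp add: is_solution_G0_def)
    have inf0: "(INF x. ereal (g x)) = 0" using sol ug by (simp add: is_solution_G0_def)
    have gmin: "g x0 \<le> g y" for y
      by (rule slope_0_rev) (use sl[of x0] assms(1) in simp)
    have gx0: "g x0 = 0"
    proof -
      have "ereal (g x0) \<le> (INF x. ereal (g x))" using gmin by (intro INF_greatest) simp
      then have "g x0 \<le> 0" using inf0 by (simp add: zero_ereal_def)
      then show ?thesis using g0[of x0] by simp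
    qed
    have glip: "g x - g y \<le> dist x y" for x y
    proof (cases "x = x0")
      case True
      have "g x0 - g y \<le> dist x0 y" using gmin[of y] zero_le_dist[of x0 y] by linarith
      then show ?thesis using True by simp
    next
      case False
      show ?thesis by (rule slope_le1_rev) (use sl[of x] assms(2)[OF False] in simp)
    qed
    have gslope: "\<exists>w. w \<noteq> z \<and> lam * dist z w < g z - g w" if "z \<noteq> x0" "0 < lam" "lam < 1" for z lam
      by (rule slope_ge1_rev[OF _ that(2,3)]) (use sl[of z] assms(2)[OF that(1)] in simp)
    have "g x = dist x x0" for x
    proof (rule antisym)
      show "g x \<le> dist x x0" using glip[of x x0] gx0 by simp
      show "dist x x0 \<le> g x" by (rule core[OF comp g0 glip gslope gx0])
    qed
    then show "u = (\<lambda>x. ereal (dist x x0))" using ug by simp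
  next
    fix u assume u: "u = (\<lambda>x. ereal (dist x x0))"
    have "is_solution_G0 l (\<lambda>x. ereal (dist x x0))"
    proof (rule sol_of_real[where l=l and g="\<lambda>x. dist x x0", OF assms])
      show "dist x x0 - dist y x0 \<le> dist x y" for x y using dist_triangle[of x x0 y] by simp
      show "\<exists>w. w \<noteq> z \<and> lam * dist z w < dist z x0 - dist w x0"
        if "z \<noteq> x0" "0 < lam" "lam < 1" for z lam
        using that by (intro exI[of _ x0]) simp
    qed simp_all
    then show "is_solution_G0 l u" using u by simp
  qed
next
  assume uniq: "\<forall>u. is_solution_G0 l u \<longleftrightarrow> u = (\<lambda>x. ereal (dist x x0))"
  show "complete (UNIV :: 'a set)"
  proof (rule ccontr)
    assume "\<not> complete (UNIV :: 'a set)"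
    then obtain s :: "nat \<Rightarrow> 'a" where cs: "Cauchy s" and nc: "\<not> (\<exists>l. s \<longlonglongrightarrow> l)"
      unfolding complete_def by blast
    obtain g where g0: "\<And>x. 0 \<le> g x" and gx0: "g x0 = 0" and glip: "\<And>x y. g x - g y \<le> dist x y"
      and gslope: "\<And>z lam. z \<noteq> x0 \<Longrightarrow> 0 < lam \<Longrightarrow> lam < 1 \<Longrightarrow> \<exists>w. w \<noteq> z \<and> lam * dist z w < g z - g w"
      and gne: "\<exists>x. g x \<noteq> dist x x0"
      using noncomplete_sol[OF cs nc, of x0] by blast
    have "is_solution_G0 l (\<lambda>x. ereal (g x))"
      by (rule sol_of_real[where l=l and g=g, OF assms g0 gx0 glip gslope])
    then have "(\<lambda>x. ereal (g x)) = (\<lambda>x. ereal (dist x x0))" using uniq by blast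
    then have "g x = dist x x0" for x by (metis ereal.inject)
    then show False using gne by blast
  qed
qed

end
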